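(* Let $A,B\in\mathbb R^{\mathcal N\times\mathcal N}$ with $A$ invertible, and assume that among the generalized eigenvalues $\lambda\in\mathbb C$ of $Av=\lambda Bv$ there is a unique positive one $\lambda>0$ of smallest modulus, and that it is simple. Let $u,u^*$, $k$, $M$, $\tilde u^*$, $P$, $P^*$ and the pseudo-inverses be as in the context. Let $u_N,u_N^*\in\mathbb R^{\mathcal N}$ with $\langle u_N^*,Au_N\rangle\ne0$, let $k_N:=\frac{\langle u_N^*,Bu_N\rangle}{\langle u_N^*,Au_N\rangle}$ satisfy $k_N\notin\sigma\big((PMP)|_{[\operatorname{Span}\{\tilde u^*\}]^\perp}\big)$ and $k_N\notin\sigma\big((P^*M^TP^* )|_{[\operatorname{Span}\{u\}]^\perp}\big)$, and let $$C_N^k:=\Big\|\big[P^*(P^*M^TP^*-k_NI)^+P^*\big]^T(M-kI)P(PMP-k_NI)^+PA^{-1}\Big\|.$$ Then $$C_N^k\le\frac{\|M-kI\|\,\|PA^{-1}\|}{\operatorname{dist}\big(k_N,\operatorname{Num}((PMP)|_{[\operatorname{Span}\{\tilde u^*\}]^\perp})\big)\;\operatorname{dist}\big(k_N,\operatorname{Num}((P^*M^TP^* )|_{[\operatorname{Span}\{u\}]^\perp})\big)},$$ where the right-hand side is read as $+\infty$ if one of the distances vanishes.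
   Context: $\mathbb R^{\mathcal N}$ carries the Euclidean inner product $\langle\cdot,\cdot\rangle$ and norm; matrix norms are induced operator norms. "Simple" means $k=1/\lambda$ is an algebraically simple eigenvalue of $M=A^{-1}B$. $u,u^*$ are unit vectors with $Au=\lambda Bu$, $A^Tu^*=\lambda B^Tu^*$; $\tilde u^*=A^Tu^*/\|A^Tu^*\|$; $P=I-\frac{u(\tilde u^* )^T}{\langle u,\tilde u^*\rangle}$, $P^*=I-\frac{\tilde u^*u^T}{\langle u,\tilde u^*\rangle}$ (here $\langle u,\tilde u^*\rangle\ne0$). $(PMP-k_NI)^+$ is the inverse of $(PMP-k_NI)|_{[\operatorname{Span}\{\tilde u^*\}]^\perp}$ on $[\operatorname{Span}\{\tilde u^*\}]^\perp$ and $0$ on $\operatorname{Span}\{u\}$; $(P^*M^TP^*-k_NI)^+$ is the inverse of $(P^*M^TP^*-k_NI)|_{[\operatorname{Span}\{u\}]^\perp}$ on $[\operatorname{Span}\{u\}]^\perp$ and $0$ on $\operatorname{Span}\{\tilde u^*\}$. For a linear map $Q$ of a subspace $W$ into itself, the numerical range is $\operatorname{Num}(Q)=\overline{\{\langle v,Qv\rangle: v\in W,\ \|v\|=1\}}$. *)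

theory Defs
  imports "HOL-Analysis.Analysis" "HOL-Computational_Algebra.Polynomial"
begin

definition cmat :: "real^'n^'m \<Rightarrow> complex^'n^'m" where
  "cmat A = (\<chi> i j. complex_of_real (A $ i $ j))"

definition gen_eigenvalue :: "real^'n^'n \<Rightarrow> real^'n^'n \<Rightarrow> complex \<Rightarrow> bool" where
  "gen_eigenvalue A B \<mu> \<longleftrightarrow>
     (\<exists>v::complex^'n. v \<noteq> 0 \<and> cmat A *v v = \<mu> *s (cmat B *v v))"

definition charpoly :: "real^'n^'n \<Rightarrow> real poly" where
  "charpoly M = det (\<chi> i j. (if i = j then [:0, 1:] else 0) - [:M $ i $ j:])"

definition alg_simple_eigenvalue :: "real^'n^'n \<Rightarrow> real \<Rightarrow> bool" where
  "alg_simple_eigenvalue M k \<longleftrightarrow> order k (charpoly M) = 1"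

definition outer :: "real^'n \<Rightarrow> real^'n \<Rightarrow> real^'n^'n" where
  "outer x y = (\<chi> i j. x $ i * y $ j)"

definition opnorm :: "real^'n^'m \<Rightarrow> real" where
  "opnorm X = onorm (\<lambda>x. X *v x)"

definition eigenvalue_on :: "real^'n^'n \<Rightarrow> (real^'n) set \<Rightarrow> real \<Rightarrow> bool" where
  "eigenvalue_on T W \<mu> \<longleftrightarrow> (\<exists>w\<in>W. w \<noteq> 0 \<and> T *v w = \<mu> *\<^sub>R w)"

definition pinv_on :: "real^'n^'n \<Rightarrow> (real^'n) set \<Rightarrow> (real^'n) set \<Rightarrow> real^'n^'n" where
  "pinv_on T W Z = (THE X. (\<forall>w\<in>W. X *v w \<in> W \<and> T *v (X *v w) = w) \<and> (\<forall>z\<in>Z. X *v z = 0))"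

definition num_range :: "real^'n^'n \<Rightarrow> (real^'n) set \<Rightarrow> real set" where
  "num_range T W = closure {v \<bullet> (T *v v) | v. v \<in> W \<and> norm v = 1}"

end

theory Submission
  imports Defs
begin

lemma poly_det: "poly (det (A::real poly^'n^'n)) x = det (\<chi> i j. poly (A$i$j) x)"
  unfolding det_def by (simp add: poly_sum poly_prod)
lemma mat_mulv: "mat x *v (v::real^'n) = x *\<^sub>R v"
proof -
  have "\<And>i. (\<Sum>j\<in>UNIV. (if i = j then x else 0) * v $ j) = (\<Sum>j\<in>UNIV. if i = j then x * v$j else 0)"
    by (rule sum.cong) auto
  thus ?thesis by (simp add: vec_eq_iff matrix_vector_mult_def mat_def)
qed
lemma charpoly_eval: "poly (charpoly M) x = det (mat x - M)"
  unfolding charpoly_def poly_det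
  by (rule arg_cong[where f=det]) (simp add: vec_eq_iff mat_def)
lemma det_sing:
  fixes R :: "real^'n^'n"
  assumes "w v* R = 0" "w \<noteq> 0"
  shows "det R = 0"
proof -
  have "transpose R *v w = 0" using assms by simp
  hence "\<not> invertible (transpose R)"
    by (metis assms(2) inj_matrix_vector_mult injD matrix_vector_mult_0_right)
  thus ?thesis using invertible_det_nz det_transpose by metis
qed
lemma charpoly_nz: "charpoly (M::real^'n^'n) \<noteq> 0"
proof
  assume h: "charpoly M = 0"
  define x where "x = onorm ((*v) M) + 1"
  have "det (mat x - M) = 0" using h charpoly_eval by (metis poly_0)
  hence "\<not> invertible (mat x - M)" using invertible_det_nz by blast
  hence "\<not> inj ((*v) (mat x - M))"
    using matrix_left_invertible_injective invertible_left_inverse by blast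
  then obtain v where v: "v \<noteq> 0" "(mat x - M) *v v = 0"
    unfolding inj_def
    by (metis eq_iff_diff_eq_0 matrix_vector_mult_diff_distrib)
  hence "M *v v = x *\<^sub>R v"
    by (simp add: matrix_vector_mult_diff_rdistrib mat_mulv)
  hence "norm (x *\<^sub>R v) \<le> onorm ((*v) M) * norm v"
    by (metis onorm matrix_vector_mul_bounded_linear)
  moreover have "onorm ((*v) M) \<ge> 0" by (simp add: onorm_pos_le)
  ultimately show False using v unfolding x_def by simp
qed

lemma simple_nonorth:
  fixes M :: "real^'n^'n" and u w :: "real^'n"
  assumes Mu: "M *v u = k *\<^sub>R u" and Mw: "transpose M *v w = k *\<^sub>R w"
    and u0: "u \<noteq> 0" and w0: "w \<noteq> 0" and simple: "alg_simple_eigenvalue M k"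
  shows "u \<bullet> w \<noteq> 0"
proof
  assume c: "u \<bullet> w = 0"
  obtain j where uj: "u$j \<noteq> 0" using u0 by (metis vec_eq_iff zero_index)
  define p where "p = charpoly M"
  define D where "D = det (\<chi> i l. if l = j then [:u$i:] else (if i = l then [:0,1:] else 0) - [:M$i$l:])"
  have Dev: "poly D x = det (\<chi> i l. if l = j then u$i else (mat x - M)$i$l)" for x
    unfolding D_def poly_det
    by (rule arg_cong[where f=det]) (simp add: vec_eq_iff mat_def)
  have cram: "poly D x * (x - k) = u$j * poly p x" if xk: "x \<noteq> k" for x
  proof -
    define v where "v = (1/(x-k)) *\<^sub>R u"
    have "(mat x - M) *v v = (1/(x-k)) *\<^sub>R (x *\<^sub>R u - k *\<^sub>R u)"
      by (simp add: v_def matrix_vector_mult_diff_rdistrib mat_mulv matrix_vector_mult_scaleR Mu scaleR_diff_right)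
    also have "\<dots> = u" using xk by (simp add: scaleR_diff_left[symmetric])
    finally have h: "(mat x - M) *v v = u" .
    have "poly D x = v$j * det (mat x - M)"
      unfolding Dev using cramer_lemma[where A="mat x - M" and k=j and x=v, unfolded h] .
    thus ?thesis using xk unfolding p_def charpoly_eval v_def by (simp add: field_simps)
  qed
  have eq: "[:-k,1:] * D = smult (u$j) p"
  proof -
    let ?q = "[:-k,1:] * D - smult (u$j) p"
    have "{x. x \<noteq> k} \<subseteq> {x. poly ?q x = 0}" using cram by (auto simp: algebra_simps)
    moreover have "infinite {x::real. x \<noteq> k}"
    proof -
      have "{x::real. x \<noteq> k} = UNIV - {k}" by auto
      thus ?thesis using infinite_UNIV_char_0 Diff_infinite_finite[of "{k}" "UNIV::real set"] by simp
    qed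
    ultimately have "?q = 0" using poly_roots_finite infinite_super by blast
    thus ?thesis by simp
  qed
  have "poly D k = 0"
  proof -
    let ?R = "(\<chi> i l. if l = j then u$i else (mat k - M)$i$l) :: real^'n^'n"
    have "w v* ?R = 0"
    proof -
      have MT: "w v* M = k *\<^sub>R w" using Mw by simp
      have "(w v* ?R)$l = 0" for l
      proof (cases "l = j")
        case True
        then show ?thesis using c by (simp add: vector_matrix_mult_def inner_vec_def mult.commute)
      next
        case False
        have "(w v* ?R)$l = (w v* (mat k - M))$l"
          using False by (simp add: vector_matrix_mult_def)
        also have "w v* (mat k - M) = k *\<^sub>R w - w v* M"
        proof -
          have "(w v* (mat k - M))$l = k * w$l - (w v* M)$l" for l
          proof -
            have "(w v* (mat k - M))$l = (\<Sum>i\<in>UNIV. (if i = l then k * w$i else 0) - w$i * M$i$l)"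
              unfolding vector_matrix_mult_def mat_def by (simp add: right_diff_distrib; rule sum.cong; auto)
            also have "\<dots> = k * w$l - (w v* M)$l"
              by (simp add: sum_subtractf vector_matrix_mult_def)
            finally show ?thesis .
          qed
          thus ?thesis by (simp add: vec_eq_iff)
        qed
        finally show ?thesis using MT by simp
      qed
      thus ?thesis by (simp add: vec_eq_iff)
    qed
    hence "det ?R = 0" by (rule det_sing[OF _ w0])
    thus ?thesis using Dev[of k] by simp
  qed
  then obtain r where r: "D = [:-k,1:] * r" using poly_eq_0_iff_dvd by (metis dvdE)
  have "p = [:-k,1:]^2 * smult (1 / u$j) r"
  proof -
    have e2: "smult (u$j) p = [:-k,1:]^2 * r" using eq r by (metis power2_eq_square mult.assoc)
    have "p = smult (1/u$j) (smult (u$j) p)" using uj by simp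
    also have "\<dots> = [:-k,1:]^2 * smult (1 / u$j) r" unfolding e2 by simp
    finally show ?thesis .
  qed
  hence d2: "[:-k,1:]^2 dvd p" by (metis dvd_triv_left)
  have "order k p = 1" using simple unfolding alg_simple_eigenvalue_def p_def .
  hence "[:-k,1:]^Suc (order k p) dvd p" using d2 by (simp add: numeral_2_eq_2)
  thus False using order_2 charpoly_nz unfolding p_def by blast
qed


lemma outer_mulv: "outer a b *v v = (b \<bullet> v) *\<^sub>R a"
  by (simp add: vec_eq_iff outer_def matrix_vector_mult_def inner_vec_def sum_distrib_left mult_ac)

lemma smat_mulv: "(c *\<^sub>R A) *v (v::real^'n) = c *\<^sub>R (A *v v)"
  by (simp add: vec_eq_iff matrix_vector_mult_def sum_distrib_left mult_ac)

lemma proj_apply: "(mat 1 - (1/c) *\<^sub>R outer a b) *v v = v - ((b \<bullet> v)/c) *\<^sub>R (a::real^'n)"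
  by (simp add: matrix_vector_mult_diff_rdistrib smat_mulv outer_mulv)

lemma nr_bound:
  fixes R :: "real^'n^'n"
  assumes xb: "x \<bullet> b = 0" and xw: "x \<bullet> w = x \<bullet> (R *v x) - \<mu> * (x \<bullet> x)"
  shows "infdist \<mu> (num_range R {v. v \<bullet> b = 0}) * norm x \<le> norm w"
proof (cases "x = 0")
  case True then show ?thesis by simp
next
  case False
  define v where "v = (1 / norm x) *\<^sub>R x"
  have nx: "norm x > 0" using False by simp
  have v1: "norm v = 1" using nx by (simp add: v_def)
  have vb: "v \<bullet> b = 0" using xb by (simp add: v_def)
  have "v \<bullet> (R *v v) \<in> num_range R {v. v \<bullet> b = 0}"
    unfolding num_range_def using v1 vb by (intro closure_subset[THEN subsetD]) blast
  hence "infdist \<mu> (num_range R {v. v \<bullet> b = 0}) \<le> dist \<mu> (v \<bullet> (R *v v))"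
    by (rule infdist_le)
  also have "v \<bullet> (R *v v) = (x \<bullet> (R *v x)) / (norm x)^2"
    by (simp add: v_def matrix_vector_mult_scaleR power2_eq_square)
  also have "dist \<mu> ((x \<bullet> (R *v x)) / (norm x)^2) = \<bar>x \<bullet> w\<bar> / (norm x)^2"
  proof -
    have "x \<bullet> x = (norm x)^2" by (simp add: power2_norm_eq_inner)
    hence e: "x \<bullet> (R *v x) = x \<bullet> w + \<mu> * (norm x)^2" using xw by simp
    have "\<mu> - (x \<bullet> (R *v x)) / (norm x)^2 = - (x \<bullet> w) / (norm x)^2"
      unfolding e using nx by (simp add: add_divide_distrib)
    thus ?thesis by (simp add: dist_real_def)
  qed
  also have "\<dots> \<le> norm x * norm w / (norm x)^2"
    by (intro divide_right_mono Cauchy_Schwarz_ineq2) simp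
  also have "\<dots> = norm w / norm x" using nx by (simp add: power2_eq_square)
  finally show ?thesis using nx by (simp add: field_simps)
qed



lemma minv:
  assumes "invertible (A::real^'n^'n)"
  shows "A ** matrix_inv A = mat 1 \<and> matrix_inv A ** A = mat 1"
  using assms unfolding invertible_def matrix_inv_def by (rule someI_ex)

lemma pinv_spec:
  fixes T Q :: "real^'n^'n" and a b :: "real^'n"
  assumes ab: "a \<bullet> b \<noteq> 0"
    and Q: "Q = mat 1 - (1/(a \<bullet> b)) *\<^sub>R outer a b"
    and ne: "\<not> eigenvalue_on (Q ** T ** Q) {v. v \<bullet> b = 0} \<mu>"
  shows "(\<forall>w. w \<bullet> b = 0 \<longrightarrow>
            (pinv_on (Q ** T ** Q - mat \<mu>) {v. v \<bullet> b = 0} (span {a}) *v w) \<bullet> b = 0 \<and>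
            (Q ** T ** Q - mat \<mu>) *v (pinv_on (Q ** T ** Q - mat \<mu>) {v. v \<bullet> b = 0} (span {a}) *v w) = w)
         \<and> pinv_on (Q ** T ** Q - mat \<mu>) {v. v \<bullet> b = 0} (span {a}) *v a = 0"
proof -
  define c where "c = a \<bullet> b"
  define L where "L = Q ** T ** Q - mat \<mu>"
  define W where "W = {v::real^'n. v \<bullet> b = 0}"
  have c0: "c \<noteq> 0" using ab c_def by simp
  have Qv: "Q *v v = v - ((b \<bullet> v)/c) *\<^sub>R a" for v
    unfolding Q c_def by (rule proj_apply)
  have bQ: "b \<bullet> (Q *v v) = 0" for v
    using c0 unfolding Qv c_def by (simp add: inner_diff_right inner_commute)
  have Qa: "Q *v a = 0" using c0 unfolding Qv c_def by (simp add: inner_commute)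
  have QW: "v \<bullet> b = 0 \<Longrightarrow> Q *v v = v" for v unfolding Qv by (simp add: inner_commute)
  have Lv: "L *v v = Q *v (T *v (Q *v v)) - \<mu> *\<^sub>R v" for v
    unfolding L_def by (simp add: matrix_vector_mult_diff_rdistrib matrix_vector_mul_assoc matrix_mul_assoc mat_mulv)
  have bL: "b \<bullet> (L *v (Q *v v)) = 0" for v
    unfolding Lv by (simp add: inner_diff_right bQ)
  have Linj: "w \<bullet> b = 0 \<Longrightarrow> L *v w = 0 \<Longrightarrow> w = 0" for w
  proof (rule ccontr)
    assume h: "w \<bullet> b = 0" "L *v w = 0" "w \<noteq> 0"
    have "(Q ** T ** Q) *v w = \<mu> *\<^sub>R w"
      using h(2) unfolding L_def by (simp add: matrix_vector_mult_diff_rdistrib mat_mulv)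
    thus False using ne h unfolding eigenvalue_on_def by blast
  qed
  define G where "G = L ** Q + outer a b"
  have Gv: "G *v v = L *v (Q *v v) + (b \<bullet> v) *\<^sub>R a" for v
    unfolding G_def by (simp add: matrix_vector_mult_add_rdistrib matrix_vector_mul_assoc outer_mulv)
  have bG: "b \<bullet> (G *v v) = (b \<bullet> v) * c" for v
    unfolding Gv c_def by (simp add: inner_add_right bL inner_commute)
  have Ginj: "inj ((*v) G)"
  proof (rule injI)
    fix x y assume "G *v x = G *v y"
    hence g0: "G *v (x - y) = 0" by (simp add: matrix_vector_mult_diff_distrib)
    hence "(b \<bullet> (x - y)) * c = 0" using bG by (metis inner_zero_right)
    hence bv: "(x - y) \<bullet> b = 0" using c0 by (simp add: inner_commute)
    hence "L *v (x - y) = 0" using g0 unfolding Gv QW[OF bv] by (simp add: inner_commute)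
    thus "x = y" using Linj[OF bv] by simp
  qed
  then obtain G' where "G' ** G = mat 1" using matrix_left_invertible_injective by blast
  hence "invertible G" using invertible_left_inverse by blast
  then obtain G' where GG': "G ** G' = mat 1" using invertible_right_inverse by blast
  define X0 where "X0 = G' ** Q"
  define Pr where "Pr = (\<lambda>X::real^'n^'n. (\<forall>w\<in>W. X *v w \<in> W \<and> L *v (X *v w) = w) \<and> (\<forall>z\<in>span {a}. X *v z = 0))"
  have XQ: "X *v v = X *v (Q *v v)" if "Pr X" for X v
  proof -
    have "a \<in> span {a}" by (simp add: span_base)
    hence Xa: "X *v a = 0" using that unfolding Pr_def by blast
    have "v = Q *v v + ((b \<bullet> v)/c) *\<^sub>R a" unfolding Qv by simp
    hence "X *v v = X *v (Q *v v) + ((b \<bullet> v)/c) *\<^sub>R (X *v a)"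
      by (metis matrix_vector_right_distrib matrix_vector_mult_scaleR)
    thus ?thesis using Xa by simp
  qed
  have PX0: "Pr X0"
    unfolding Pr_def
  proof (rule conjI; intro ballI)
    fix w assume wW: "w \<in> W"
    define x where "x = G' *v w"
    have Gx: "G *v x = w" unfolding x_def using GG' by (simp add: matrix_vector_mul_assoc)
    have "(b \<bullet> x) * c = 0" using bG[of x] wW unfolding Gx W_def by (simp add: inner_commute)
    hence xb: "x \<bullet> b = 0" using c0 by (simp add: inner_commute)
    have X0w: "X0 *v w = x" unfolding X0_def x_def using QW wW W_def
      by (simp add: matrix_vector_mul_assoc[symmetric])
    have "L *v x = w" using Gx xb unfolding Gv QW[OF xb] by (simp add: inner_commute)
    thus "X0 *v w \<in> W \<and> L *v (X0 *v w) = w" using xb X0w W_def by simp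
  next
    fix z assume "z \<in> span {a}"
    then obtain t where "z = t *\<^sub>R a" by (auto simp: span_singleton)
    thus "X0 *v z = 0" unfolding X0_def
      by (simp add: matrix_vector_mul_assoc[symmetric] matrix_vector_mult_scaleR Qa)
  qed
  have uniq: "X = X0" if "Pr X" for X
    unfolding matrix_eq
  proof
    fix v
    have qW: "Q *v v \<in> W" unfolding W_def using bQ by (simp add: inner_commute)
    define d where "d = X *v (Q *v v) - X0 *v (Q *v v)"
    have dW: "d \<bullet> b = 0" using that PX0 qW unfolding Pr_def W_def d_def by (simp add: inner_diff_left)
    have "L *v d = 0" using that PX0 qW unfolding Pr_def d_def by (simp add: matrix_vector_mult_diff_distrib)
    hence "d = 0" using Linj dW by simp
    thus "X *v v = X0 *v v" using XQ[OF that] XQ[OF PX0] unfolding d_def by simp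
  qed
  have "Pr (THE X. Pr X)" using PX0 uniq by (metis theI)
  moreover have "pinv_on L W (span {a}) = (THE X. Pr X)" unfolding pinv_on_def Pr_def ..
  ultimately have "Pr (pinv_on L W (span {a}))" by simp
  moreover have "a \<in> span {a}" by (simp add: span_base)
  ultimately show ?thesis unfolding Pr_def L_def W_def by auto
qed


lemma inner_transpose: "q \<bullet> (transpose N *v y) = (N *v q) \<bullet> (y::real^'n)"
  by (metis dot_lmul_matrix inner_commute transpose_matrix_vector)

lemma inner_mat: "q \<bullet> (N *v y) = (transpose N *v q) \<bullet> (y::real^'n)"
  by (metis inner_transpose transpose_transpose)

lemma vec_eq_inner: "(\<And>q. q \<bullet> x = q \<bullet> y) \<Longrightarrow> x = (y::real^'n)"
  by (metis inner_diff_left inner_eq_zero_iff right_minus_eq inner_commute)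

lemma opn: "norm (N *v x) \<le> opnorm N * norm (x::real^'n)"
  unfolding opnorm_def by (rule onorm) simp

theorem proposition4:
  fixes A B M P Ps :: "real^'n^'n"
    and u us ut uN usN :: "real^'n"
    and lam k kN CNk :: real
  assumes A_inv: "invertible A"
    and lam_pos: "lam > 0"
    and lam_eig: "gen_eigenvalue A B (complex_of_real lam)"
    and lam_min: "\<forall>\<mu>. gen_eigenvalue A B \<mu> \<and> \<mu> \<noteq> complex_of_real lam \<longrightarrow> cmod \<mu> > lam"
    and M_def: "M = matrix_inv A ** B"
    and k_def: "k = 1 / lam"
    and simple: "alg_simple_eigenvalue M k"
    and u_unit: "norm u = 1" and u_eig: "A *v u = lam *\<^sub>R (B *v u)"
    and us_unit: "norm us = 1" and us_eig: "transpose A *v us = lam *\<^sub>R (transpose B *v us)"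
    and ut_def: "ut = (1 / norm (transpose A *v us)) *\<^sub>R (transpose A *v us)"
    and P_def: "P = mat 1 - (1 / (u \<bullet> ut)) *\<^sub>R outer u ut"
    and Ps_def: "Ps = mat 1 - (1 / (u \<bullet> ut)) *\<^sub>R outer ut u"
    and nonzero: "usN \<bullet> (A *v uN) \<noteq> 0"
    and kN_def: "kN = (usN \<bullet> (B *v uN)) / (usN \<bullet> (A *v uN))"
    and spec1: "\<not> eigenvalue_on (P ** M ** P) {v. v \<bullet> ut = 0} kN"
    and spec2: "\<not> eigenvalue_on (Ps ** transpose M ** Ps) {v. v \<bullet> u = 0} kN"
    and C_def: "CNk = opnorm (transpose (Ps ** pinv_on (Ps ** transpose M ** Ps - mat kN)
                                                  {v. v \<bullet> u = 0} (span {ut}) ** Ps)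
                   ** (M - mat k) ** P
                   ** pinv_on (P ** M ** P - mat kN) {v. v \<bullet> ut = 0} (span {u})
                   ** P ** matrix_inv A)"
  shows "infdist kN (num_range (P ** M ** P) {v. v \<bullet> ut = 0}) \<noteq> 0 \<and>
         infdist kN (num_range (Ps ** transpose M ** Ps) {v. v \<bullet> u = 0}) \<noteq> 0 \<longrightarrow>
         CNk \<le> opnorm (M - mat k) * opnorm (P ** matrix_inv A) /
               (infdist kN (num_range (P ** M ** P) {v. v \<bullet> ut = 0}) *
                infdist kN (num_range (Ps ** transpose M ** Ps) {v. v \<bullet> u = 0}))"
proof
  define d1 where "d1 = infdist kN (num_range (P ** M ** P) {v. v \<bullet> ut = 0})"
  define d2 where "d2 = infdist kN (num_range (Ps ** transpose M ** Ps) {v. v \<bullet> u = 0})"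
  assume "d1 \<noteq> 0 \<and> d2 \<noteq> 0"
  hence d1p: "d1 > 0" and d2p: "d2 > 0" unfolding d1_def d2_def using infdist_nonneg
    by (metis less_eq_real_def)+
  define Ai where "Ai = matrix_inv A"
  have AAi: "A ** Ai = mat 1" and AiA: "Ai ** A = mat 1" using minv[OF A_inv] Ai_def by auto
  have Bu: "B *v u = (1/lam) *\<^sub>R (A *v u)" using u_eig lam_pos by simp
  have Mu: "M *v u = k *\<^sub>R u"
    unfolding M_def Ai_def[symmetric] k_def
    by (simp add: matrix_vector_mul_assoc[symmetric] Bu matrix_vector_mult_scaleR
        matrix_vector_mul_assoc AiA)
  define uA where "uA = transpose A *v us"
  have us0: "us \<noteq> 0" using us_unit by auto
  have uA0: "uA \<noteq> 0"
  proof
    assume "uA = 0"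
    hence "transpose Ai *v uA = 0" by simp
    moreover have "transpose Ai *v uA = us"
      unfolding uA_def by (metis matrix_vector_mul_assoc matrix_transpose_mul AAi transpose_mat matrix_vector_mul_lid)
    ultimately show False using us0 by simp
  qed
  have ut_eq: "ut = (1 / norm uA) *\<^sub>R uA" using ut_def uA_def by simp
  have ut0: "ut \<noteq> 0" using uA0 ut_eq by simp
  have BTus: "transpose B *v us = (1/lam) *\<^sub>R uA" using us_eig lam_pos uA_def by simp
  have MTuA: "transpose M *v uA = k *\<^sub>R uA"
  proof -
    have "transpose M *v uA = transpose B *v (transpose Ai *v (transpose A *v us))"
      unfolding M_def Ai_def[symmetric] uA_def by (metis matrix_transpose_mul matrix_vector_mul_assoc)
    also have "transpose Ai *v (transpose A *v us) = us"
      by (metis matrix_vector_mul_assoc matrix_transpose_mul AAi transpose_mat matrix_vector_mul_lid)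
    finally show ?thesis using BTus k_def by simp
  qed
  have MTut: "transpose M *v ut = k *\<^sub>R ut"
    unfolding ut_eq using MTuA by (simp add: matrix_vector_mult_scaleR)
  have u0: "u \<noteq> 0" using u_unit by auto
  have c0: "u \<bullet> ut \<noteq> 0" by (rule simple_nonorth[OF Mu MTut u0 ut0 simple])
  define c where "c = u \<bullet> ut"
  have cc: "ut \<bullet> u = c" unfolding c_def by (simp add: inner_commute)
  have cnz: "c \<noteq> 0" using c0 c_def by simp
  have Pv: "P *v v = v - ((ut \<bullet> v)/c) *\<^sub>R u" for v
    unfolding P_def c_def by (rule proj_apply)
  have Psv: "Ps *v v = v - ((u \<bullet> v)/c) *\<^sub>R ut" for v
    unfolding Ps_def c_def by (rule proj_apply)
  have uu: "u \<bullet> u = 1" using u_unit by (simp add: dot_square_norm)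
  have bP: "ut \<bullet> (P *v v) = 0" for v
    using cnz unfolding Pv by (simp add: inner_diff_right cc)
  have Pfix: "v \<bullet> ut = 0 \<Longrightarrow> P *v v = v" for v unfolding Pv by (simp add: inner_commute)
  have Psfix: "v \<bullet> u = 0 \<Longrightarrow> Ps *v v = v" for v unfolding Psv by (simp add: inner_commute)
  have uPs: "u \<bullet> (Ps *v v) = 0" for v
    using cnz unfolding Psv by (simp add: inner_diff_right c_def)
  have Psut: "Ps *v ut = 0" using cnz unfolding Psv by (simp add: c_def[symmetric])
  have PsPs: "Ps *v (Ps *v v) = Ps *v v" for v using Psfix uPs by (simp add: inner_commute)
  have PPs: "q \<bullet> (P *v w) = (Ps *v q) \<bullet> w" for q w
    unfolding Pv Psv by (simp add: inner_diff_right inner_diff_left inner_commute)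
  have zP: "z \<bullet> u = 0 \<Longrightarrow> z \<bullet> (P *v w) = z \<bullet> w" for z w
    unfolding Pv by (simp add: inner_diff_right inner_commute)
  define X where "X = pinv_on (P ** M ** P - mat kN) {v. v \<bullet> ut = 0} (span {u})"
  define Y where "Y = pinv_on (Ps ** transpose M ** Ps - mat kN) {v. v \<bullet> u = 0} (span {ut})"
  define L1 where "L1 = P ** M ** P - mat kN"
  define L2 where "L2 = Ps ** transpose M ** Ps - mat kN"
  have Xs: "\<forall>w. w \<bullet> ut = 0 \<longrightarrow> (X *v w) \<bullet> ut = 0 \<and> L1 *v (X *v w) = w"
    using pinv_spec[of u ut P M kN] c0 P_def spec1 unfolding X_def L1_def by blast
  have Ps_def': "Ps = mat 1 - (1 / (ut \<bullet> u)) *\<^sub>R outer ut u" using Ps_def by (simp add: inner_commute)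
  have Ys: "\<forall>w. w \<bullet> u = 0 \<longrightarrow> (Y *v w) \<bullet> u = 0 \<and> L2 *v (Y *v w) = w"
    using pinv_spec[of ut u Ps "transpose M" kN] c0 Ps_def' spec2 unfolding Y_def L2_def
    by (simp add: inner_commute)
  have L1v: "L1 *v x = P *v (M *v (P *v x)) - kN *\<^sub>R x" for x
    unfolding L1_def by (simp add: matrix_vector_mult_diff_rdistrib matrix_vector_mul_assoc matrix_mul_assoc mat_mulv)
  have L2v: "L2 *v x = Ps *v (transpose M *v (Ps *v x)) - kN *\<^sub>R x" for x
    unfolding L2_def by (simp only: matrix_vector_mult_diff_rdistrib matrix_vector_mul_assoc matrix_mul_assoc mat_mulv)
  have L2inj: "w \<bullet> u = 0 \<Longrightarrow> L2 *v w = 0 \<Longrightarrow> w = 0" for w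
  proof (rule ccontr)
    assume h: "w \<bullet> u = 0" "L2 *v w = 0" "w \<noteq> 0"
    have "(Ps ** transpose M ** Ps) *v w = kN *\<^sub>R w"
      using h(2) unfolding L2_def by (simp only: matrix_vector_mult_diff_rdistrib mat_mulv right_minus_eq)
    thus False using spec2 h unfolding eigenvalue_on_def by blast
  qed
  have adj: "q \<bullet> (L1 *v x) = (L2 *v q) \<bullet> x" for q x
  proof -
    have "q \<bullet> (P *v (M *v (P *v x))) = (Ps *v q) \<bullet> (M *v (P *v x))" by (rule PPs)
    also have "\<dots> = (transpose M *v (Ps *v q)) \<bullet> (P *v x)" by (rule inner_mat)
    also have "\<dots> = (Ps *v (transpose M *v (Ps *v q))) \<bullet> x" by (rule PPs)
    finally have "q \<bullet> (P *v (M *v (P *v x))) = (Ps *v (transpose M *v (Ps *v q))) \<bullet> x" .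
    thus ?thesis unfolding L1v L2v by (simp add: inner_diff_right inner_diff_left inner_commute)
  qed
  define Z where "Z = transpose (Ps ** Y ** Ps)"
  have Zv: "q \<bullet> (Z *v y) = (Ps *v (Y *v (Ps *v q))) \<bullet> y" for q y
    unfolding Z_def inner_transpose by (simp only: matrix_vector_mul_assoc matrix_mul_assoc)
  have YL2: "w \<bullet> u = 0 \<Longrightarrow> Y *v (L2 *v w) = w" for w
  proof -
    assume wu: "w \<bullet> u = 0"
    have uPs': "(Ps *v v) \<bullet> u = 0" for v using uPs by (simp add: inner_commute)
    have "(L2 *v w) \<bullet> u = (Ps *v (transpose M *v (Ps *v w))) \<bullet> u - kN * (w \<bullet> u)"
      by (simp only: L2v inner_diff_left inner_scaleR_left)
    hence lw: "(L2 *v w) \<bullet> u = 0" using wu uPs' by simp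
    hence "(Y *v (L2 *v w)) \<bullet> u = 0" and "L2 *v (Y *v (L2 *v w)) = L2 *v w" using Ys by auto
    hence "(Y *v (L2 *v w) - w) \<bullet> u = 0" and "L2 *v (Y *v (L2 *v w) - w) = 0"
      using wu by (auto simp: inner_diff_left matrix_vector_mult_diff_distrib)
    hence "Y *v (L2 *v w) - w = 0" by (rule L2inj)
    thus ?thesis by simp
  qed
  have PsL2: "Ps *v (L2 *v q) = L2 *v (Ps *v q)" for q
    unfolding L2v by (simp add: matrix_vector_mult_diff_distrib matrix_vector_mult_scaleR PsPs)
  have ZW: "(Z *v y) \<bullet> ut = 0" for y
    using Zv[of ut y] by (simp add: Psut inner_commute)
  have ZL: "L1 *v (Z *v y) = y" if yW: "y \<bullet> ut = 0" for y
  proof (rule vec_eq_inner)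
    fix q
    have Psq: "(Ps *v q) \<bullet> u = 0" using uPs by (simp add: inner_commute)
    have "q \<bullet> (L1 *v (Z *v y)) = (L2 *v q) \<bullet> (Z *v y)" by (rule adj)
    also have "\<dots> = (Ps *v (Y *v (Ps *v (L2 *v q)))) \<bullet> y" by (rule Zv)
    also have "Ps *v (L2 *v q) = L2 *v (Ps *v q)" by (rule PsL2)
    also have "Y *v (L2 *v (Ps *v q)) = Ps *v q" by (rule YL2[OF Psq])
    also have "(Ps *v (Ps *v q)) \<bullet> y = q \<bullet> y"
    proof -
      have "(Ps *v q) \<bullet> y = q \<bullet> y" using yW unfolding Psv by (simp add: inner_diff_left inner_diff_right inner_commute)
      thus ?thesis by (simp only: PsPs)
    qed
    finally show "q \<bullet> (L1 *v (Z *v y)) = q \<bullet> y" .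
  qed
  have ZB: "d1 * norm (Z *v y) \<le> norm y" if yW: "y \<bullet> ut = 0" for y
  proof -
    have e: "y = (P ** M ** P) *v (Z *v y) - kN *\<^sub>R (Z *v y)"
      using ZL[OF yW] unfolding L1_def by (simp only: matrix_vector_mult_diff_rdistrib mat_mulv)
    have "(Z *v y) \<bullet> y = (Z *v y) \<bullet> ((P ** M ** P) *v (Z *v y)) - kN * ((Z *v y) \<bullet> (Z *v y))"
      by (subst e) (simp add: inner_diff_right)
    from nr_bound[OF ZW this] show ?thesis unfolding d1_def by (simp add: mult.commute)
  qed
  define Mk where "Mk = M - mat k"
  have Mkv: "Mk *v x = M *v x - k *\<^sub>R x" for x
    unfolding Mk_def by (simp only: matrix_vector_mult_diff_rdistrib mat_mulv)
  have Mk0: "Mk *v u = 0" unfolding Mkv Mu by simp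
  have utMk: "(Mk *v x) \<bullet> ut = 0" for x
  proof -
    have "ut \<bullet> (M *v x) = (transpose M *v ut) \<bullet> x" by (rule inner_mat)
    hence "ut \<bullet> (M *v x) = k * (ut \<bullet> x)" unfolding MTut by simp
    thus ?thesis unfolding Mkv by (simp add: inner_diff_left inner_diff_right inner_commute)
  qed
  define K where "K = opnorm Mk * opnorm (P ** Ai) / (d1 * d2)"
  have CN: "CNk = opnorm (Z ** Mk ** P ** X ** P ** Ai)"
    unfolding C_def Z_def Mk_def X_def Y_def Ai_def ..
  have main: "norm ((Z ** Mk ** P ** X ** P ** Ai) *v v) \<le> K * norm v" for v
  proof -
    define h where "h = P *v (Ai *v v)"
    have hW: "h \<bullet> ut = 0" using bP unfolding h_def by (simp add: inner_commute)
    have hn: "norm h \<le> opnorm (P ** Ai) * norm v"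
      unfolding h_def matrix_vector_mul_assoc by (rule opn)
    define b where "b = X *v h"
    have bW: "b \<bullet> ut = 0" and Lb: "L1 *v b = h" using Xs hW unfolding b_def by auto
    define y where "y = Mk *v b"
    have Tv: "(Z ** Mk ** P ** X ** P ** Ai) *v v = Z *v y"
    proof -
      have "(Z ** Mk ** P ** X ** P ** Ai) *v v = Z *v (Mk *v (P *v (X *v (P *v (Ai *v v)))))"
        by (simp only: matrix_vector_mul_assoc[symmetric])
      also have "\<dots> = Z *v (Mk *v (P *v b))" unfolding b_def h_def ..
      also have "P *v b = b" by (rule Pfix[OF bW])
      finally show ?thesis unfolding y_def .
    qed
    have yW: "y \<bullet> ut = 0" unfolding y_def by (rule utMk)
    define z where "z = b - (u \<bullet> b) *\<^sub>R u"
    have zu: "z \<bullet> u = 0" unfolding z_def by (simp add: inner_diff_left uu inner_commute[of b u])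
    have yz: "y = Mk *v z" unfolding y_def z_def
      by (simp add: matrix_vector_mult_diff_distrib matrix_vector_mult_scaleR Mk0)
    have yn: "norm y \<le> opnorm Mk * norm z" unfolding yz by (rule opn)
    have zh: "d2 * norm z \<le> norm h"
    proof -
      have Pb: "P *v b = b" by (rule Pfix[OF bW])
      have h_eq: "h = P *v (M *v b) - kN *\<^sub>R b" using Lb unfolding L1v Pb by simp
      have "z \<bullet> h = z \<bullet> (M *v b) - kN * (z \<bullet> b)"
        unfolding h_eq by (simp add: inner_diff_right zP[OF zu])
      also have "z \<bullet> (M *v b) = z \<bullet> (M *v z)"
      proof -
        have "b = z + (u \<bullet> b) *\<^sub>R u" unfolding z_def by simp
        hence "M *v b = M *v z + ((u \<bullet> b) * k) *\<^sub>R u"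
          by (metis Mu matrix_vector_right_distrib matrix_vector_mult_scaleR scaleR_scaleR)
        thus ?thesis using zu by (simp add: inner_add_right)
      qed
      also have "z \<bullet> b = z \<bullet> z"
      proof -
        have "b = z + (u \<bullet> b) *\<^sub>R u" unfolding z_def by simp
        hence "z \<bullet> b = z \<bullet> z + (u \<bullet> b) * (z \<bullet> u)" by (metis inner_add_right inner_scaleR_right)
        thus ?thesis using zu by simp
      qed
      also have "z \<bullet> (M *v z) = z \<bullet> ((Ps ** transpose M ** Ps) *v z)"
      proof -
        have "(Ps ** transpose M ** Ps) *v z = Ps *v (transpose M *v z)"
          by (simp only: matrix_vector_mul_assoc[symmetric] Psfix[OF zu])
        also have "\<dots> = transpose M *v z - ((u \<bullet> (transpose M *v z))/c) *\<^sub>R ut" by (rule Psv)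
        also have "u \<bullet> (transpose M *v z) = (M *v u) \<bullet> z" by (rule inner_transpose)
        also have "\<dots> = 0" using zu by (simp add: Mu inner_commute)
        finally have "(Ps ** transpose M ** Ps) *v z = transpose M *v z" by simp
        moreover have "z \<bullet> (transpose M *v z) = z \<bullet> (M *v z)"
          using inner_transpose[of z M z] by (simp add: inner_commute)
        ultimately show ?thesis by simp
      qed
      finally have "z \<bullet> h = z \<bullet> ((Ps ** transpose M ** Ps) *v z) - kN * (z \<bullet> z)" .
      from nr_bound[OF zu this] show ?thesis unfolding d2_def by (simp add: mult.commute)
    qed
    have Zn: "d1 * norm (Z *v y) \<le> norm y" by (rule ZB[OF yW])
    have on0: "opnorm Mk \<ge> 0" unfolding opnorm_def by (simp add: onorm_pos_le)
    have "d1 * d2 * norm (Z *v y) \<le> d2 * norm y" using Zn d2p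
      by (metis mult.assoc mult.commute mult_left_mono less_imp_le)
    also have "\<dots> \<le> d2 * (opnorm Mk * norm z)" using yn d2p by (simp add: mult_left_mono)
    also have "\<dots> = opnorm Mk * (d2 * norm z)" by simp
    also have "\<dots> \<le> opnorm Mk * norm h" using zh on0 by (simp add: mult_left_mono)
    also have "\<dots> \<le> opnorm Mk * (opnorm (P ** Ai) * norm v)" using hn on0 by (simp add: mult_left_mono)
    finally have "d1 * d2 * norm (Z *v y) \<le> opnorm Mk * opnorm (P ** Ai) * norm v" by simp
    hence "norm (Z *v y) \<le> opnorm Mk * opnorm (P ** Ai) * norm v / (d1 * d2)"
      using d1p d2p by (simp add: field_simps)
    thus ?thesis unfolding Tv K_def by simp
  qed
  have "CNk \<le> K" unfolding CN opnorm_def by (rule onorm_le) (rule main)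
  thus "CNk \<le> opnorm (M - mat k) * opnorm (P ** matrix_inv A) /
               (infdist kN (num_range (P ** M ** P) {v. v \<bullet> ut = 0}) *
                infdist kN (num_range (Ps ** transpose M ** Ps) {v. v \<bullet> u = 0}))"
    unfolding K_def Mk_def Ai_def d1_def d2_def .
qed

end
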